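(* The relations ${\rm Abv}(x,y,z):=(y<x\wedge xy\bot z)\vee(z<x\wedge xz\bot y)$ and $U(x,y,z):=(y<x\vee z<x)\wedge(y\bot z)$ are primitive positive definable in $(P;{\rm Low})$.
   Context: $(P;\leq)$ is the random partial order (Fraïssé limit of all finite partial orders); $x<y$ means $x\leq y\wedge x\neq y$; $x\bot y$ means $x,y$ incomparable; $xy\bot z$ abbreviates $x\bot z\wedge y\bot z$, and $z\bot xy$ likewise. ${\rm Low}(x,y,z):=(x<y\wedge z\bot xy)\vee(x<z\wedge y\bot xz)$. Primitive positive definable means definable by a formula $\exists\bar y(\psi_1\wedge\cdots\wedge\psi_m)$ with atomic $\psi_i$ (including equalities). *)

theory Defs
  imports Main "HOL-Library.Countable_Set"
begin

text \<open>The random partial order, characterised (up to isomorphism) as the countable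
partial order with the one-point extension property: for every finite A, every
down-closed D and up-closed U in A with D strictly below U, there is a new point
above D, below U and incomparable to the rest of A.\<close>

definition random_po :: "('a \<Rightarrow> 'a \<Rightarrow> bool) \<Rightarrow> bool" where
  "random_po le \<longleftrightarrow>
     countable (UNIV :: 'a set) \<and>
     (\<forall>x. le x x) \<and>
     (\<forall>x y. le x y \<and> le y x \<longrightarrow> x = y) \<and>
     (\<forall>x y z. le x y \<and> le y z \<longrightarrow> le x z) \<and>
     (\<forall>A D U. finite A \<and> D \<subseteq> A \<and> U \<subseteq> A \<and>
        (\<forall>a\<in>A. \<forall>d\<in>D. le a d \<longrightarrow> a \<in> D) \<and>
        (\<forall>a\<in>A. \<forall>u\<in>U. le u a \<longrightarrow> a \<in> U) \<and>
        (\<forall>d\<in>D. \<forall>u\<in>U. le d u \<and> d \<noteq> u)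
        \<longrightarrow> (\<exists>x. x \<notin> A \<and> (\<forall>d\<in>D. le d x) \<and> (\<forall>u\<in>U. le x u) \<and>
                 (\<forall>a\<in>A - D - U. \<not> le a x \<and> \<not> le x a)))"

definition lt :: "('a \<Rightarrow> 'a \<Rightarrow> bool) \<Rightarrow> 'a \<Rightarrow> 'a \<Rightarrow> bool" where
  "lt le x y \<longleftrightarrow> le x y \<and> x \<noteq> y"

definition incomp :: "('a \<Rightarrow> 'a \<Rightarrow> bool) \<Rightarrow> 'a \<Rightarrow> 'a \<Rightarrow> bool" where
  "incomp le x y \<longleftrightarrow> \<not> le x y \<and> \<not> le y x"

definition Low :: "('a \<Rightarrow> 'a \<Rightarrow> bool) \<Rightarrow> 'a \<Rightarrow> 'a \<Rightarrow> 'a \<Rightarrow> bool" where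
  "Low le x y z \<longleftrightarrow>
     (lt le x y \<and> incomp le x z \<and> incomp le y z) \<or>
     (lt le x z \<and> incomp le x y \<and> incomp le z y)"

definition Abv :: "('a \<Rightarrow> 'a \<Rightarrow> bool) \<Rightarrow> 'a \<Rightarrow> 'a \<Rightarrow> 'a \<Rightarrow> bool" where
  "Abv le x y z \<longleftrightarrow>
     (lt le y x \<and> incomp le x z \<and> incomp le y z) \<or>
     (lt le z x \<and> incomp le x y \<and> incomp le z y)"

definition Urel :: "('a \<Rightarrow> 'a \<Rightarrow> bool) \<Rightarrow> 'a \<Rightarrow> 'a \<Rightarrow> 'a \<Rightarrow> bool" where
  "Urel le x y z \<longleftrightarrow> (lt le y x \<or> lt le z x) \<and> incomp le y z"

text \<open>Primitive positive formulas over one ternary relation symbol: atoms are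
R(v_i,v_j,v_k) or v_i = v_j; variables 0,1,2 are the free variables, all others are
existentially quantified.\<close>

datatype pp_atom = RAt nat nat nat | EqAt nat nat

fun sat_atom :: "('a \<Rightarrow> 'a \<Rightarrow> 'a \<Rightarrow> bool) \<Rightarrow> (nat \<Rightarrow> 'a) \<Rightarrow> pp_atom \<Rightarrow> bool" where
  "sat_atom R v (RAt i j k) = R (v i) (v j) (v k)"
| "sat_atom R v (EqAt i j) = (v i = v j)"

definition pp_definable3 ::
  "('a \<Rightarrow> 'a \<Rightarrow> 'a \<Rightarrow> bool) \<Rightarrow> ('a \<Rightarrow> 'a \<Rightarrow> 'a \<Rightarrow> bool) \<Rightarrow> bool" where
  "pp_definable3 R S \<longleftrightarrow>
     (\<exists>phi :: pp_atom list. \<forall>x y z.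
        S x y z \<longleftrightarrow>
        (\<exists>v :: nat \<Rightarrow> 'a. v 0 = x \<and> v 1 = y \<and> v 2 = z \<and> (\<forall>a\<in>set phi. sat_atom R v a)))"

end

theory Submission
  imports Defs
begin

lemma rp_refl: "random_po le \<Longrightarrow> le x x"
  unfolding random_po_def by (elim conjE) (erule spec)
lemma rp_po: "random_po le \<Longrightarrow> (\<forall>x y. le x y \<and> le y x \<longrightarrow> x = y) \<and> (\<forall>x y z. le x y \<and> le y z \<longrightarrow> le x z)"
  unfolding random_po_def by (elim conjE) (intro conjI; assumption)
lemma rp_antisym: "random_po le \<Longrightarrow> le x y \<Longrightarrow> le y x \<Longrightarrow> x = y"
  using rp_po by metis
lemma rp_trans: "random_po le \<Longrightarrow> le x y \<Longrightarrow> le y z \<Longrightarrow> le x z"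
  using rp_po by metis

lemma rp_ext:
  assumes "random_po le" "finite A" "D \<subseteq> A" "U \<subseteq> A"
    "\<forall>a\<in>A. \<forall>d\<in>D. le a d \<longrightarrow> a \<in> D"
    "\<forall>a\<in>A. \<forall>u\<in>U. le u a \<longrightarrow> a \<in> U"
    "\<forall>d\<in>D. \<forall>u\<in>U. le d u \<and> d \<noteq> u"
  shows "\<exists>x. x \<notin> A \<and> (\<forall>d\<in>D. le d x) \<and> (\<forall>u\<in>U. le x u) \<and>
                 (\<forall>a\<in>A - D - U. \<not> le a x \<and> \<not> le x a)"
  using assms(1) unfolding random_po_def apply (elim conjE)
  apply (drule spec[of _ A]) apply (drule spec[of _ D]) apply (drule spec[of _ U])
  using assms(2-) by (elim impE) (intro conjI; assumption)+

lemma ext_free: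
  assumes "random_po le" "finite A"
  shows "\<exists>x. x \<notin> A \<and> (\<forall>b\<in>A. \<not> le x b \<and> \<not> le b x)"
  using rp_ext[OF assms, of "{}" "{}"] by auto

lemma ext_below:
  assumes rp: "random_po le" and fin: "finite A" and aA: "a \<in> A"
  shows "\<exists>x. x \<notin> A \<and> (\<forall>b\<in>A. (le x b \<longleftrightarrow> le a b) \<and> \<not> le b x)"
proof -
  let ?U = "{b\<in>A. le a b}"
  have c: "\<forall>a'\<in>A. \<forall>u\<in>?U. le u a' \<longrightarrow> a' \<in> ?U"
    using rp_trans[OF rp] by blast
  have "\<exists>x. x \<notin> A \<and> (\<forall>d\<in>{}. le d x) \<and> (\<forall>u\<in>?U. le x u) \<and>
                 (\<forall>b\<in>A - {} - ?U. \<not> le b x \<and> \<not> le x b)"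
    by (rule rp_ext[OF rp fin]) (use c in auto)
  then obtain x where x: "x \<notin> A" "\<forall>u\<in>?U. le x u" "\<forall>b\<in>A - {} - ?U. \<not> le b x \<and> \<not> le x b"
    by blast
  have xa: "le x a" using x(2) aA rp_refl[OF rp] by blast
  show ?thesis
  proof (intro exI conjI ballI)
    show "x \<notin> A" by fact
  next
    fix b assume b: "b \<in> A"
    show "le x b \<longleftrightarrow> le a b"
      using x b xa rp_trans[OF rp] by blast
    show "\<not> le b x"
    proof
      assume "le b x"
      show False
      proof (cases "le a b")
        case True
        then have "le x b" using x(2) b by blast
        then have "x = b" using \<open>le b x\<close> rp_antisym[OF rp] by blast
        then show False using x(1) b by simp
      next
        case False
        then show False using x(3) b \<open>le b x\<close> by blast
      qed
    qed
  qed
qed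

lemma ext_above:
  assumes rp: "random_po le" and fin: "finite A" and aA: "a \<in> A"
  shows "\<exists>x. x \<notin> A \<and> (\<forall>b\<in>A. (le b x \<longleftrightarrow> le b a) \<and> \<not> le x b)"
proof -
  let ?D = "{b\<in>A. le b a}"
  have c: "\<forall>a'\<in>A. \<forall>d\<in>?D. le a' d \<longrightarrow> a' \<in> ?D"
    using rp_trans[OF rp] by blast
  have "\<exists>x. x \<notin> A \<and> (\<forall>d\<in>?D. le d x) \<and> (\<forall>u\<in>{}. le x u) \<and>
                 (\<forall>b\<in>A - ?D - {}. \<not> le b x \<and> \<not> le x b)"
    by (rule rp_ext[OF rp fin]) (use c in auto)
  then obtain x where x: "x \<notin> A" "\<forall>d\<in>?D. le d x" "\<forall>b\<in>A - ?D - {}. \<not> le b x \<and> \<not> le x b"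
    by blast
  have xa: "le a x" using x(2) aA rp_refl[OF rp] by blast
  show ?thesis
  proof (intro exI conjI ballI)
    show "x \<notin> A" by fact
  next
    fix b assume b: "b \<in> A"
    show "le b x \<longleftrightarrow> le b a"
      using x b xa rp_trans[OF rp] by blast
    show "\<not> le x b"
    proof
      assume "le x b"
      show False
      proof (cases "le b a")
        case True
        then have "le b x" using x(2) b by blast
        then have "x = b" using \<open>le x b\<close> rp_antisym[OF rp] by blast
        then show False using x(1) b by simp
      next
        case False
        then show False using x(3) b \<open>le x b\<close> by blast
      qed
    qed
  qed
qed

lemma Low_sym: "Low le a b c = Low le a c b"
  unfolding Low_def by blast

lemma Low_inc: "Low le a b c \<Longrightarrow> \<not> le b c \<and> \<not> le c b"
  unfolding Low_def lt_def incomp_def by blast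

lemma Urel_back:
  assumes rp: "random_po le"
    and h1: "Low le y x v" and h2: "Low le z x v" and h3: "Low le u y z" and h4: "Low le s u v"
  shows "Urel le x y z"
proof -
  have yz: "incomp le y z" using Low_inc[OF h3] unfolding incomp_def by blast
  have uv: "\<not> le u v" using Low_inc[OF h4] by blast
  have "lt le y x \<or> lt le z x"
  proof (rule ccontr)
    assume n: "\<not> (lt le y x \<or> lt le z x)"
    then have "lt le y v" "lt le z v" using h1 h2 unfolding Low_def by auto
    moreover have "lt le u y \<or> lt le u z" using h3 unfolding Low_def by auto
    ultimately have "le u v" unfolding lt_def using rp_trans[OF rp] by blast
    then show False using uv by simp
  qed
  then show ?thesis using yz unfolding Urel_def by simp
qed

lemma Abv_back:
  assumes rp: "random_po le"
    and h1: "Low le u y z" and h2: "Urel le x y z" and h3: "Low le t u x"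
  shows "Abv le x y z"
proof -
  have ux: "\<not> le u x" "\<not> le x u" using Low_inc[OF h3] by blast+
  have yz: "\<not> le y z" "\<not> le z y" using Low_inc[OF h1] by blast+
  have c: "lt le y x \<or> lt le z x" using h2 unfolding Urel_def by simp
  show ?thesis
    using h1 unfolding Low_def
  proof
    assume a: "lt le u y \<and> incomp le u z \<and> incomp le y z"
    have "\<not> lt le y x" using a ux rp_trans[OF rp] unfolding lt_def by blast
    then have zx: "lt le z x" using c by simp
    have "\<not> le x y" using zx yz rp_trans[OF rp] unfolding lt_def by blast
    moreover have "\<not> le y x" using \<open>\<not> lt le y x\<close> \<open>\<not> le x y\<close> rp_refl[OF rp] unfolding lt_def by metis
    ultimately show ?thesis using zx yz unfolding Abv_def incomp_def by blast
  next
    assume a: "lt le u z \<and> incomp le u y \<and> incomp le z y"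
    have "\<not> lt le z x" using a ux rp_trans[OF rp] unfolding lt_def by blast
    then have yx: "lt le y x" using c by simp
    have "\<not> le x z" using yx yz rp_trans[OF rp] unfolding lt_def by blast
    moreover have "\<not> le z x" using \<open>\<not> lt le z x\<close> \<open>\<not> le x z\<close> rp_refl[OF rp] unfolding lt_def by metis
    ultimately show ?thesis using yx yz unfolding Abv_def incomp_def by blast
  qed
qed

lemma Urel_fwd0:
  assumes rp: "random_po le" and yx: "lt le y x" and yz: "incomp le y z"
  shows "\<exists>v u s. Low le y x v \<and> Low le z x v \<and> Low le u y z \<and> Low le s u v"
proof -
  have tr: "\<And>a b c. le a b \<Longrightarrow> le b c \<Longrightarrow> le a c" using rp_trans[OF rp] by blast
  have an: "\<And>a b. le a b \<Longrightarrow> le b a \<Longrightarrow> a = b" using rp_antisym[OF rp] by blast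
  have rf: "\<And>a. le a a" using rp_refl[OF rp] by blast
  have zx: "\<not> le x z" using yx yz tr unfolding lt_def incomp_def by blast
  obtain v where v: "Low le y x v" "Low le z x v" "\<not> le y v" "\<not> le v y"
  proof (cases "le z x")
    case True
    obtain v where v: "v \<notin> {x,y,z}" "\<forall>b\<in>{x,y,z}. \<not> le v b \<and> \<not> le b v"
      using ext_free[OF rp, of "{x,y,z}"] by auto
    have "z \<noteq> x" using True yz yx unfolding lt_def incomp_def by blast
    then show ?thesis using that[of v] v yx yz True unfolding Low_def lt_def incomp_def by auto
  next
    case False
    obtain v where v: "v \<notin> {x,y,z}" "\<forall>b\<in>{x,y,z}. (le b v \<longleftrightarrow> le b z) \<and> \<not> le v b"
      using ext_above[OF rp, of "{x,y,z}" z] by auto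
    have "le z v" "z \<noteq> v" "\<not> le x v" "\<not> le y v" "\<not> le v x" "\<not> le v y"
      using v False zx yz rf unfolding incomp_def by auto
    then show ?thesis using that[of v] yx yz False zx unfolding Low_def lt_def incomp_def by auto
  qed
  obtain u where u: "u \<notin> {x,y,z,v}" "\<forall>b\<in>{x,y,z,v}. (le u b \<longleftrightarrow> le y b) \<and> \<not> le b u"
    using ext_below[OF rp, of "{x,y,z,v}" y] by auto
  have uf: "le u y" "u \<noteq> y" "\<not> le u z" "\<not> le z u" "\<not> le u v" "\<not> le v u"
    using u v yz rf unfolding incomp_def by auto
  have L3: "Low le u y z" using uf yz unfolding Low_def lt_def incomp_def by auto
  obtain s where s: "s \<notin> {x,y,z,v,u}" "\<forall>b\<in>{x,y,z,v,u}. (le s b \<longleftrightarrow> le u b) \<and> \<not> le b s"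
    using ext_below[OF rp, of "{x,y,z,v,u}" u] by auto
  have sf: "le s u" "s \<noteq> u" "\<not> le s v" "\<not> le v s"
    using s uf rf by auto
  have L4: "Low le s u v" using sf uf unfolding Low_def lt_def incomp_def by auto
  show ?thesis using v L3 L4 by blast
qed

lemma Urel_fwd:
  assumes rp: "random_po le" and h: "Urel le x y z"
  shows "\<exists>v u s. Low le y x v \<and> Low le z x v \<and> Low le u y z \<and> Low le s u v"
proof -
  have yz: "incomp le y z" "incomp le z y" using h unfolding Urel_def incomp_def by auto
  show ?thesis
  proof (cases "lt le y x")
    case True
    then show ?thesis using Urel_fwd0[OF rp True yz(1)] by blast
  next
    case False
    then have "lt le z x" using h unfolding Urel_def by simp
    then obtain v u s where "Low le z x v" "Low le y x v" "Low le u z y" "Low le s u v"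
      using Urel_fwd0[OF rp _ yz(2)] by blast
    then show ?thesis using Low_sym[of le u z y] by blast
  qed
qed

lemma Abv_fwd0:
  assumes rp: "random_po le" and yx: "lt le y x" and zx: "incomp le x z" and zy: "incomp le y z"
  shows "\<exists>u t. Low le u y z \<and> Low le t u x"
proof -
  have rf: "\<And>a. le a a" using rp_refl[OF rp] by blast
  obtain u where u: "u \<notin> {x,y,z}" "\<forall>b\<in>{x,y,z}. (le u b \<longleftrightarrow> le z b) \<and> \<not> le b u"
    using ext_below[OF rp, of "{x,y,z}" z] by auto
  have uf: "le u z" "u \<noteq> z" "\<not> le u y" "\<not> le y u" "\<not> le u x" "\<not> le x u"
    using u zx zy rf unfolding incomp_def by auto
  have L1: "Low le u y z" using uf zy unfolding Low_def lt_def incomp_def by auto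
  obtain t where t: "t \<notin> {x,y,z,u}" "\<forall>b\<in>{x,y,z,u}. (le t b \<longleftrightarrow> le u b) \<and> \<not> le b t"
    using ext_below[OF rp, of "{x,y,z,u}" u] by auto
  have tf: "le t u" "t \<noteq> u" "\<not> le t x" "\<not> le x t"
    using t uf rf by auto
  have L2: "Low le t u x" using tf uf unfolding Low_def lt_def incomp_def by auto
  show ?thesis using L1 L2 by blast
qed

lemma Abv_fwd:
  assumes rp: "random_po le" and h: "Abv le x y z"
  shows "\<exists>u t. Low le u y z \<and> Low le t u x"
  using h unfolding Abv_def
proof
  assume "lt le y x \<and> incomp le x z \<and> incomp le y z"
  then show ?thesis using Abv_fwd0[OF rp] by blast
next
  assume "lt le z x \<and> incomp le x y \<and> incomp le z y"
  then obtain u t where "Low le u z y" "Low le t u x" using Abv_fwd0[OF rp, of z x y] by blast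
  then show ?thesis using Low_sym[of le u z y] by blast
qed

lemma Abv_Urel: "Abv le x y z \<Longrightarrow> Urel le x y z"
  unfolding Abv_def Urel_def incomp_def by blast

theorem lemma43:
  fixes le :: "'a \<Rightarrow> 'a \<Rightarrow> bool"
  assumes "random_po le"
  shows "pp_definable3 (Low le) (Abv le) \<and> pp_definable3 (Low le) (Urel le)"
proof
  show "pp_definable3 (Low le) (Urel le)"
    unfolding pp_definable3_def
  proof (intro exI allI)
    fix x y z
    show "Urel le x y z \<longleftrightarrow> (\<exists>w. w 0 = x \<and> w 1 = y \<and> w 2 = z \<and>
        (\<forall>a\<in>set [RAt 1 0 4, RAt 2 0 4, RAt 5 1 2, RAt 6 5 4]. sat_atom (Low le) w a))"
    proof
      assume "Urel le x y z"
      then obtain v u s where h: "Low le y x v" "Low le z x v" "Low le u y z" "Low le s u v"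
        using Urel_fwd[OF assms] by blast
      let ?w = "\<lambda>i. [x,y,z,x,v,u,s] ! i"
      show "\<exists>w. w 0 = x \<and> w 1 = y \<and> w 2 = z \<and>
        (\<forall>a\<in>set [RAt 1 0 4, RAt 2 0 4, RAt 5 1 2, RAt 6 5 4]. sat_atom (Low le) w a)"
        by (rule exI[of _ ?w]) (simp add: h numeral_eq_Suc)
    next
      assume "\<exists>w. w 0 = x \<and> w 1 = y \<and> w 2 = z \<and>
        (\<forall>a\<in>set [RAt 1 0 4, RAt 2 0 4, RAt 5 1 2, RAt 6 5 4]. sat_atom (Low le) w a)"
      then obtain w :: "nat \<Rightarrow> 'a" where w: "w 0 = x" "w 1 = y" "w 2 = z"
        "Low le (w 1) (w 0) (w 4)" "Low le (w 2) (w 0) (w 4)" "Low le (w 5) (w 1) (w 2)" "Low le (w 6) (w 5) (w 4)"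
        by auto
      show "Urel le x y z" using Urel_back[OF assms w(4-7)] w(1-3) by simp
    qed
  qed
  show "pp_definable3 (Low le) (Abv le)"
    unfolding pp_definable3_def
  proof (intro exI allI)
    fix x y z
    show "Abv le x y z \<longleftrightarrow> (\<exists>w. w 0 = x \<and> w 1 = y \<and> w 2 = z \<and>
        (\<forall>a\<in>set [RAt 1 0 4, RAt 2 0 4, RAt 5 1 2, RAt 6 5 4, RAt 3 1 2, RAt 7 3 0]. sat_atom (Low le) w a))"
    proof
      assume a: "Abv le x y z"
      then obtain v u s where h: "Low le y x v" "Low le z x v" "Low le u y z" "Low le s u v"
        using Urel_fwd[OF assms Abv_Urel] by blast
      obtain p t where h2: "Low le p y z" "Low le t p x" using Abv_fwd[OF assms a] by blast
      let ?w = "\<lambda>i. [x,y,z,p,v,u,s,t] ! i"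
      show "\<exists>w. w 0 = x \<and> w 1 = y \<and> w 2 = z \<and>
        (\<forall>a\<in>set [RAt 1 0 4, RAt 2 0 4, RAt 5 1 2, RAt 6 5 4, RAt 3 1 2, RAt 7 3 0]. sat_atom (Low le) w a)"
        by (rule exI[of _ ?w]) (simp add: h h2 numeral_eq_Suc)
    next
      assume "\<exists>w. w 0 = x \<and> w 1 = y \<and> w 2 = z \<and>
        (\<forall>a\<in>set [RAt 1 0 4, RAt 2 0 4, RAt 5 1 2, RAt 6 5 4, RAt 3 1 2, RAt 7 3 0]. sat_atom (Low le) w a)"
      then obtain w :: "nat \<Rightarrow> 'a" where w: "w 0 = x" "w 1 = y" "w 2 = z"
        "Low le (w 1) (w 0) (w 4)" "Low le (w 2) (w 0) (w 4)" "Low le (w 5) (w 1) (w 2)" "Low le (w 6) (w 5) (w 4)"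
        "Low le (w 3) (w 1) (w 2)" "Low le (w 7) (w 3) (w 0)"
        by auto
      have "Urel le x y z" using Urel_back[OF assms w(4-7)] w(1-3) by simp
      then show "Abv le x y z" using Abv_back[OF assms w(8) _ w(9)] w(1-3) by simp
    qed
  qed
qed

end
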